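(* Let $m,n$ be positive integers and $m\le d\le m+n$. There is a constant $C=C(m,n,d)$ such that for every $E\subset\mathbb{R}^{n+m}$, $$\mathcal{H}^d_\infty(E)\le C(\mathrm{diam}\,E)^m\,\mathcal{H}^{d-m}_\infty(\pi(E)),$$ where $\pi:\mathbb{R}^{n+m}\to\mathbb{R}^n$, $\pi(x,x_{n+1},\dots,x_{n+m})=x$.
   Context: For $q\ge0$, the $q$-dimensional Hausdorff content $\mathcal{H}^q_\infty(E)$ is the infimum of $\sum_j\boldsymbol\alpha_q(\mathrm{diam}\,E_j/2)^q$ over all countable coverings $\{E_j\}$ of $E$, where $\boldsymbol\alpha_q=\pi^{q/2}/\Gamma(\frac q2+1)$. *)

theory Defs
  imports "HOL-Analysis.Analysis"
begin

definition hc_alpha :: "real \<Rightarrow> real" where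
  "hc_alpha q = pi powr (q / 2) / Gamma (q / 2 + 1)"

definition ediam :: "'a::metric_space set \<Rightarrow> ennreal" where
  "ediam S = (if bounded S then ennreal (diameter S) else \<infinity>)"

definition hc_term :: "real \<Rightarrow> 'a::metric_space set \<Rightarrow> ennreal" where
  "hc_term q S =
     (if S = {} then 0
      else if bounded S then
        ennreal (hc_alpha q * (if q = 0 then 1 else (diameter S / 2) powr q))
      else \<infinity>)"

definition hausdorff_content :: "real \<Rightarrow> 'a::metric_space set \<Rightarrow> ennreal" where
  "hausdorff_content q E =
     (INF F \<in> {F :: nat \<Rightarrow> 'a set. E \<subseteq> (\<Union>j. F j)}. \<Sum>j. hc_term q (F j))"

end

theory Submission
  imports Defs
begin


lemma hc_alpha_pos: "q \<ge> 0 \<Longrightarrow> hc_alpha q > 0"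
  unfolding hc_alpha_def by (intro divide_pos_pos) auto

lemma hc_term_empty[simp]: "hc_term q {} = 0"
  by (simp add: hc_term_def)

lemma hc_term_mono:
  assumes "q \<ge> 0" "S \<subseteq> T"
  shows "hc_term q S \<le> hc_term q T"
proof (cases "S = {}")
  case False
  then have T: "T \<noteq> {}" using assms by auto
  show ?thesis
  proof (cases "bounded T")
    case True
    then have bS: "bounded S" using assms bounded_subset by blast
    have "diameter S \<le> diameter T" using diameter_subset assms True by blast
    moreover have "0 \<le> diameter S" using diameter_ge_0 bS by blast
    ultimately have "(diameter S / 2) powr q \<le> (diameter T / 2) powr q"
      using assms by (intro powr_mono2) auto
    then show ?thesis using False T True bS hc_alpha_pos[OF assms(1)]
      by (auto simp: hc_term_def intro!: ennreal_leI mult_left_mono)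
  next
    case False
    then show ?thesis using T by (simp add: hc_term_def)
  qed
qed simp

lemma H_le_term: "hausdorff_content q S \<le> hc_term q S"
proof -
  let ?F = "\<lambda>j::nat. if j = 0 then S else {}"
  have "S \<subseteq> (\<Union>j. ?F j)" by auto
  then have "hausdorff_content q S \<le> (\<Sum>j. hc_term q (?F j))"
    unfolding hausdorff_content_def by (intro INF_lower) auto
  also have "(\<Sum>j. hc_term q (?F j)) = (\<Sum>j\<in>{0}. hc_term q (?F j))"
    by (intro suminf_finite) auto
  finally show ?thesis by simp
qed

lemma H_mono: "A \<subseteq> B \<Longrightarrow> hausdorff_content q A \<le> hausdorff_content q B"
  unfolding hausdorff_content_def by (intro INF_superset_mono) auto

lemma H_empty[simp]: "hausdorff_content q {} = 0"
  using H_le_term[of q "{}"] by simp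

lemma H_cover: "S \<subseteq> (\<Union>j. F j) \<Longrightarrow> hausdorff_content q S \<le> (\<Sum>j. hc_term q (F j))"
  unfolding hausdorff_content_def by (intro INF_lower) auto

lemma H_subadd:
  assumes S: "S \<subseteq> (\<Union>i. A i)"
  shows "hausdorff_content q S \<le> (\<Sum>i. hausdorff_content q (A i))"
proof (rule ennreal_le_epsilon)
  fix e :: real
  assume y: "(\<Sum>i. hausdorff_content q (A i)) < top" and e: "0 < e"
  define eps where "eps i = e * (1/2)^Suc i" for i :: nat
  have eps_pos: "eps i > 0" for i using e by (simp add: eps_def)
  have fin: "hausdorff_content q (A i) < top" for i
    using y ennreal_suminf_lessD by blast
  have "\<exists>G. A i \<subseteq> (\<Union>j. G j) \<and> (\<Sum>j. hc_term q (G j)) < hausdorff_content q (A i) + ennreal (eps i)" for i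
  proof -
    have "hausdorff_content q (A i) < hausdorff_content q (A i) + ennreal (eps i)"
    proof -
      obtain r where r: "r \<ge> 0" "hausdorff_content q (A i) = ennreal r"
        using fin[of i] less_top_ennreal by blast
      then show ?thesis using eps_pos[of i]
        by (simp flip: ennreal_plus add: ennreal_lessI)
    qed
    then show ?thesis unfolding hausdorff_content_def[of q "A i"] INF_less_iff by auto
  qed
  then obtain G where G: "\<And>i. A i \<subseteq> (\<Union>j. G i j)"
    "\<And>i. (\<Sum>j. hc_term q (G i j)) < hausdorff_content q (A i) + ennreal (eps i)"
    by metis
  define F where "F n = case_prod G (prod_decode n)" for n
  have "S \<subseteq> (\<Union>n. F n)"
  proof
    fix x assume "x \<in> S"
    then obtain i j where "x \<in> G i j" using S G(1) by blast
    then show "x \<in> (\<Union>n. F n)" unfolding F_def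
      by (metis (no_types, lifting) UN_iff case_prod_conv iso_tuple_UNIV_I prod_encode_inverse)
  qed
  then have "hausdorff_content q S \<le> (\<Sum>n. hc_term q (F n))" by (rule H_cover)
  also have "\<dots> = (\<Sum>i. \<Sum>j. hc_term q (G i j))"
    unfolding F_def using suminf_ennreal_2dimen[of "\<lambda>i. \<Sum>j. hc_term q (G i j)" "\<lambda>(i,j). hc_term q (G i j)"]
    by (simp add: case_prod_beta prod.case_eq_if)
  also have "\<dots> \<le> (\<Sum>i. hausdorff_content q (A i) + ennreal (eps i))"
    by (intro suminf_le) (auto intro: less_imp_le G(2))
  also have "\<dots> = (\<Sum>i. hausdorff_content q (A i)) + (\<Sum>i. ennreal (eps i))"
    by (rule suminf_add[symmetric]) auto
  also have "(\<Sum>i. ennreal (eps i)) = ennreal e"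
  proof -
    have "(\<lambda>i. eps i) sums (e * 1)" unfolding eps_def
      by (intro sums_mult power_half_series)
    then show ?thesis using eps_pos
      by (subst suminf_ennreal2) (auto simp: sums_iff less_imp_le)
  qed
  finally show "hausdorff_content q S \<le> (\<Sum>i. hausdorff_content q (A i)) + ennreal e" .
qed

lemma H_finite:
  assumes "finite I" "S \<subseteq> (\<Union>k\<in>I. T k)"
  shows "hausdorff_content q S \<le> (\<Sum>k\<in>I. hc_term q (T k))"
proof -
  obtain xs where xs: "set xs = I" "distinct xs" using finite_distinct_list[OF assms(1)] by blast
  define F where "F n = (if n < length xs then T (xs ! n) else {})" for n
  have "S \<subseteq> (\<Union>n. F n)"
  proof
    fix x assume "x \<in> S"
    then obtain k where "k \<in> I" "x \<in> T k" using assms by blast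
    then obtain n where "n < length xs" "xs ! n = k" using xs by (metis in_set_conv_nth)
    then show "x \<in> (\<Union>n. F n)" using \<open>x \<in> T k\<close> by (auto simp: F_def)
  qed
  then have "hausdorff_content q S \<le> (\<Sum>n. hc_term q (F n))" by (rule H_cover)
  also have "\<dots> = (\<Sum>n\<in>{..<length xs}. hc_term q (F n))"
    by (intro suminf_finite) (auto simp: F_def)
  also have "\<dots> = (\<Sum>n\<in>{..<length xs}. hc_term q (T (xs ! n)))"
    by (intro sum.cong) (auto simp: F_def)
  also have "\<dots> = (\<Sum>k\<in>I. hc_term q (T k))"
    using sum.reindex_bij_betw[OF bij_betw_nth[OF xs(2) refl xs(1)[symmetric]], of "\<lambda>k. hc_term q (T k)"]
    by simp
  finally show ?thesis .
qed



lemma cube_bound: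
  fixes A :: "(real ^ 'n) set" and B :: "(real ^ 'm::finite) set"
  assumes bA: "bounded A" and dA: "diameter A \<le> t" and t: "0 < t" "t \<le> R"
    and B: "B \<subseteq> cball b R" and d: "d > 0"
  shows "hausdorff_content d (A \<times> B)
     \<le> ennreal (hc_alpha d * 2 ^ CARD('m) * ((1 + 2 * real CARD('m)) / 2) powr d
                 * R ^ CARD('m) * t powr (d - real CARD('m)))"
proof -
  define m where "m = CARD('m)"
  define N where "N = nat \<lceil>R / t\<rceil>"
  have R: "R > 0" using t by linarith
  have "0 < R / t" using t R by simp
  moreover have "R / t \<le> of_int \<lceil>R / t\<rceil>" by (rule le_of_int_ceiling)
  ultimately have "(0::real) < of_int \<lceil>R / t\<rceil>" by linarith
  then have "1 \<le> \<lceil>R / t\<rceil>" by linarith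
  then have N1: "N \<ge> 1" unfolding N_def by linarith
  have Nc: "real N = of_int \<lceil>R / t\<rceil>" using \<open>1 \<le> \<lceil>R / t\<rceil>\<close> by (simp add: N_def)
  have NRt: "real N \<ge> R / t" unfolding N_def by linarith
  have NRt2: "real N \<le> 2 * R / t"
  proof -
    have "real N < R / t + 1" unfolding Nc using ceiling_correct[of "R/t"] by linarith
    also have "\<dots> \<le> 2 * R / t" using t by (simp add: field_simps)
    finally show ?thesis by simp
  qed
  define h where "h = 2 * R / real N"
  have hpos: "h > 0" using R N1 by (simp add: h_def)
  have hN: "h * real N = 2 * R" using N1 by (simp add: h_def)
  have h2t: "h \<le> 2 * t"
  proof -
    have "2 * R \<le> 2 * t * real N" using NRt t by (simp add: field_simps)
    then show ?thesis using N1 by (simp add: h_def field_simps)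
  qed
  define I where "I = (PiE (UNIV :: 'm set) (\<lambda>_. {..<N}))"
  define Q where "Q k = {y :: real ^ 'm. \<forall>i. b$i - R + h * real (k i) \<le> y$i \<and> y$i \<le> b$i - R + h * (real (k i) + 1)}" for k :: "'m \<Rightarrow> nat"
  define T where "T k = A \<times> (B \<inter> Q k)" for k
  have finI: "finite I" unfolding I_def by (intro finite_PiE) auto
  have cardI: "card I = N ^ m" unfolding I_def m_def by (simp add: card_PiE)
  have cover: "A \<times> B \<subseteq> (\<Union>k\<in>I. T k)"
  proof
    fix p assume p: "p \<in> A \<times> B"
    obtain x y where xy: "p = (x, y)" "x \<in> A" "y \<in> B" using p by auto
    define k where "k i = min (N - 1) (nat \<lfloor>(y$i - b$i + R) / h\<rfloor>)" for i
    have "k \<in> I" unfolding I_def k_def using N1 by auto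
    moreover have "y \<in> Q k"
      unfolding Q_def
    proof (intro CollectI allI)
      fix i
      define u where "u = (y$i - b$i + R) / h"
      have "\<bar>(y - b)$i\<bar> \<le> norm (y - b)" by (rule component_le_norm_cart)
      also have "\<dots> \<le> R" using B xy by (auto simp: dist_norm norm_minus_commute)
      finally have yb: "\<bar>y$i - b$i\<bar> \<le> R" by simp
      have u0: "u \<ge> 0" using yb hpos by (auto simp: u_def)
      have uN: "u \<le> real N"
      proof -
        have "y$i - b$i + R \<le> h * real N" using yb hN by linarith
        then show ?thesis using hpos by (simp add: u_def field_simps)
      qed
      have hu: "y$i = b$i - R + h * u" using hpos by (simp add: u_def)
      have "real (k i) \<le> u \<and> u \<le> real (k i) + 1"
      proof (cases "nat \<lfloor>u\<rfloor> \<le> N - 1")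
        case True
        then have "k i = nat \<lfloor>u\<rfloor>" by (simp add: k_def u_def)
        then show ?thesis using u0 by linarith
      next
        case False
        then have "k i = N - 1" by (simp add: k_def u_def)
        moreover have "real (N - 1) = real N - 1" using N1 by simp
        moreover have "u \<ge> real N - 1" using False u0 by linarith
        ultimately show ?thesis using uN by simp
      qed
      then show "b$i - R + h * real (k i) \<le> y$i \<and> y$i \<le> b$i - R + h * (real (k i) + 1)"
        using hpos hu by (auto intro: mult_left_mono)
    qed
    ultimately show "p \<in> (\<Union>k\<in>I. T k)" using xy by (auto simp: T_def)
  qed
  define c where "c = hc_alpha d * (((1 + 2 * real m) * t) / 2) powr d"
  have c0: "c \<ge> 0" using hc_alpha_pos[of d] d by (simp add: c_def)
  have term_le: "hc_term d (T k) \<le> ennreal c" for k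
  proof (cases "T k = {}")
    case True then show ?thesis by simp
  next
    case False
    have bT: "bounded (T k)" unfolding T_def
      using bA B by (intro bounded_Times) (auto intro: bounded_subset[OF bounded_cball])
    have diam: "diameter (T k) \<le> (1 + 2 * real m) * t"
    proof (rule diameter_le)
      show "T k \<noteq> {} \<or> 0 \<le> (1 + 2 * real m) * t" using False by simp
    next
      fix p q assume pq: "p \<in> T k" "q \<in> T k"
      have "norm (p - q) = norm (fst p - fst q, snd p - snd q)" by (metis fst_diff snd_diff prod.collapse)
      also have "\<dots> \<le> norm (fst p - fst q) + norm (snd p - snd q)" by (rule norm_Pair_le)
      also have "norm (fst p - fst q) \<le> t"
      proof -
        have "dist (fst p) (fst q) \<le> diameter A"
          using pq bA by (intro diameter_bounded_bound) (auto simp: T_def)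
        then show ?thesis using dA by (simp add: dist_norm)
      qed
      also have "norm (snd p - snd q) \<le> 2 * real m * t"
      proof -
        have "norm (snd p - snd q) \<le> (\<Sum>i\<in>UNIV. \<bar>(snd p - snd q)$i\<bar>)" by (rule norm_le_l1_cart)
        also have "\<dots> \<le> (\<Sum>i\<in>(UNIV::'m set). h)"
        proof (intro sum_mono)
          fix i
          have "snd p \<in> Q k" "snd q \<in> Q k" using pq by (auto simp: T_def)
          then have "b$i - R + h * real (k i) \<le> snd p$i" "snd p$i \<le> b$i - R + h * (real (k i) + 1)"
             "b$i - R + h * real (k i) \<le> snd q$i" "snd q$i \<le> b$i - R + h * (real (k i) + 1)"
            by (auto simp: Q_def)
          then show "\<bar>(snd p - snd q)$i\<bar> \<le> h" by (simp add: algebra_simps abs_le_iff)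
        qed
        also have "\<dots> = real m * h" by (simp add: m_def)
        also have "\<dots> \<le> real m * (2 * t)" using h2t by (intro mult_left_mono) auto
        finally show ?thesis by simp
      qed
      finally show "norm (p - q) \<le> (1 + 2 * real m) * t" by (simp add: algebra_simps)
    qed
    have "(diameter (T k) / 2) powr d \<le> (((1 + 2 * real m) * t) / 2) powr d"
      using diam diameter_ge_0[OF bT] d by (intro powr_mono2) auto
    then show ?thesis using False bT d hc_alpha_pos[of d]
      by (auto simp: hc_term_def c_def intro!: ennreal_leI mult_left_mono)
  qed
  have "hausdorff_content d (A \<times> B) \<le> (\<Sum>k\<in>I. hc_term d (T k))"
    by (rule H_finite[OF finI cover])
  also have "\<dots> \<le> (\<Sum>k\<in>I. ennreal c)" by (intro sum_mono term_le)
  also have "\<dots> = ennreal (real (N ^ m) * c)" using cardI c0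
    by (simp add: ennreal_mult ennreal_of_nat_eq_real_of_nat)
  also have "real (N ^ m) * c \<le> hc_alpha d * 2 ^ m * ((1 + 2 * real m) / 2) powr d
                 * R ^ m * t powr (d - real m)"
  proof -
    have pm: "(((1 + 2 * real m) * t) / 2) powr d = ((1 + 2 * real m) / 2) powr d * t powr d"
      using t by (subst powr_mult[symmetric]) (auto simp: field_simps)
    have "real (N ^ m) * c \<le> (2 * R / t) ^ m * c"
      by (intro mult_right_mono c0) (auto simp: power_mono NRt2)
    also have "\<dots> = hc_alpha d * 2 ^ m * ((1 + 2 * real m) / 2) powr d * R ^ m * (t powr d / t ^ m)"
      unfolding c_def pm using t by (simp add: power_divide power_mult_distrib field_simps)
    also have "t powr d / t ^ m = t powr (d - real m)"
      using t by (simp add: powr_diff powr_realpow)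
    finally show ?thesis by simp
  qed
  finally show ?thesis
    by (simp add: m_def ennreal_leI order_trans) 
qed



lemma ennreal_le_mult_INF:
  fixes x :: ennreal
  assumes r: "r > 0" and le: "\<And>F. F \<in> S \<Longrightarrow> x \<le> ennreal r * g F"
  shows "x \<le> ennreal r * (INF F\<in>S. g F)"
proof -
  have inv: "ennreal (1/r) * ennreal r = 1" using r by (simp flip: ennreal_mult)
  have "x * ennreal (1/r) \<le> (INF F\<in>S. g F)"
  proof (rule INF_greatest)
    fix F assume "F \<in> S"
    then have "x * ennreal (1/r) \<le> ennreal r * g F * ennreal (1/r)"
      using le by (intro mult_right_mono) auto
    also have "\<dots> = g F * (ennreal (1/r) * ennreal r)" by (simp only: ac_simps)
    also have "\<dots> = g F" using inv by simp
    finally show "x * ennreal (1/r) \<le> g F" .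
  qed
  then have "x * ennreal (1/r) * ennreal r \<le> (INF F\<in>S. g F) * ennreal r"
    by (intro mult_right_mono) auto
  moreover have "x * ennreal (1/r) * ennreal r = x" using inv by (simp only: mult.assoc) simp
  ultimately show ?thesis by (simp add: mult.commute)
qed

lemma zero_limit:
  fixes x :: ennreal
  assumes h: "\<And>t. 0 < t \<Longrightarrow> t \<le> R \<Longrightarrow> x \<le> ennreal (c * t powr s)"
    and R: "R > 0" and s: "s > 0" and c: "c \<ge> 0"
  shows "x = 0"
proof -
  have "x \<le> 0"
  proof (rule ennreal_le_epsilon)
    fix e :: real assume e: "0 < e"
    define t where "t = min R ((e / (c + 1)) powr (1 / s))"
    have t0: "0 < t" using R e c by (simp add: t_def)
    have "t powr s \<le> ((e / (c + 1)) powr (1 / s)) powr s"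
      using t0 s by (intro powr_mono2) (auto simp: t_def)
    also have "\<dots> = e / (c + 1)" using s e c by (simp add: powr_powr)
    finally have ts: "t powr s \<le> e / (c + 1)" .
    have "c * t powr s \<le> c * (e / (c + 1))" using ts c by (intro mult_left_mono) auto
    also have "\<dots> \<le> e" using c e by (simp add: field_simps)
    finally have "x \<le> ennreal e" using h[OF t0] t_def
      by (meson ennreal_leI min.cobounded1 order_trans)
    then show "x \<le> 0 + ennreal e" by simp
  qed
  then show ?thesis by simp
qed

definition KK :: "real \<Rightarrow> nat \<Rightarrow> real" where
  "KK d m = hc_alpha d * 2 ^ m * ((1 + 2 * real m) / 2) powr d * 2 powr (d - real m) / hc_alpha (d - real m)"

lemma KK_pos: "d > real m \<Longrightarrow> KK d m > 0"
  unfolding KK_def using hc_alpha_pos[of d] hc_alpha_pos[of "d - real m"]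
  by (intro divide_pos_pos mult_pos_pos) auto

lemma piece_bound:
  fixes A :: "(real ^ 'n) set" and B :: "(real ^ 'm::finite) set"
  assumes bA: "bounded A" and dA: "diameter A \<le> R" and R: "R > 0"
    and B: "B \<subseteq> cball b R" and d: "d > real CARD('m)"
  shows "hausdorff_content d (A \<times> B)
     \<le> ennreal (hc_alpha d * 2 ^ CARD('m) * ((1 + 2 * real CARD('m)) / 2) powr d
                 * R ^ CARD('m) * diameter A powr (d - real CARD('m)))"
proof (cases "diameter A > 0")
  case True
  show ?thesis using cube_bound[OF bA order_refl True dA B] d by simp
next
  case False
  have dpos: "d > 0" using d by (smt (verit) of_nat_0_le_iff)
  define c where "c = hc_alpha d * 2 ^ CARD('m) * ((1 + 2 * real CARD('m)) / 2) powr d * R ^ CARD('m)"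
  have c0: "c \<ge> 0" using hc_alpha_pos[of d] dpos R by (simp add: c_def)
  have "hausdorff_content d (A \<times> B) = 0"
  proof (rule zero_limit[OF _ R _ c0])
    fix t assume "0 < t" "t \<le> R"
    moreover have "diameter A \<le> t" using False \<open>0 < t\<close> by linarith
    ultimately show "hausdorff_content d (A \<times> B) \<le> ennreal (c * t powr (d - real CARD('m)))"
      using cube_bound[OF bA _ _ _ B dpos, of t] by (simp add: c_def)
  qed (use d in simp)
  then show ?thesis by simp
qed

lemma Q_bound:
  fixes E :: "((real ^ 'n) \<times> (real ^ 'm::finite)) set"
  assumes sE: "snd ` E \<subseteq> cball b R" and R: "R > 0"
    and cov: "fst ` E \<subseteq> (\<Union>j. F j)"
    and diamF: "\<And>j. bounded (F j \<inter> fst ` E) \<Longrightarrow> diameter (F j \<inter> fst ` E) \<le> R"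
    and d: "d > real CARD('m)"
  shows "hausdorff_content d E
     \<le> ennreal (KK d CARD('m) * R ^ CARD('m)) * (\<Sum>j. hc_term (d - real CARD('m)) (F j))"
proof -
  define m where "m = CARD('m)"
  define s where "s = d - real m"
  have s: "s > 0" using d by (simp add: s_def m_def)
  define A where "A j = F j \<inter> fst ` E" for j
  have E_sub: "E \<subseteq> (\<Union>j. A j \<times> snd ` E)"
  proof
    fix p assume "p \<in> E"
    then obtain j where "fst p \<in> F j" using cov by blast
    then show "p \<in> (\<Union>j. A j \<times> snd ` E)" using \<open>p \<in> E\<close> by (auto simp: A_def intro!: exI[of _ j] mem_Times_iff[THEN iffD2])
  qed
  have c0: "KK d m * R ^ m > 0" using KK_pos[OF d] R by (simp add: m_def)
  have each: "hausdorff_content d (A j \<times> snd ` E) \<le> ennreal (KK d m * R ^ m) * hc_term s (F j)" for j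
  proof (cases "A j = {}")
    case True then show ?thesis by simp
  next
    case Ane: False
    then have Fne: "F j \<noteq> {}" by (auto simp: A_def)
    show ?thesis
    proof (cases "bounded (F j)")
      case False
      have "ennreal (KK d m * R ^ m) \<noteq> 0" using c0 ennreal_eq_0_iff by (metis not_le)
      then have "ennreal (KK d m * R ^ m) * hc_term s (F j) = top"
        using False Fne by (simp add: hc_term_def)
      then show ?thesis by simp
    next
      case True
      have bA: "bounded (A j)" using True by (auto simp: A_def intro: bounded_subset)
      have dA: "diameter (A j) \<le> R" using diamF bA by (simp add: A_def)
      have dAF: "diameter (A j) \<le> diameter (F j)" using True by (intro diameter_subset) (auto simp: A_def)
      have dA0: "0 \<le> diameter (A j)" using diameter_ge_0[OF bA] .
      have "hausdorff_content d (A j \<times> snd ` E)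
        \<le> ennreal (hc_alpha d * 2 ^ m * ((1 + 2 * real m) / 2) powr d * R ^ m * diameter (A j) powr s)"
        using piece_bound[OF bA dA R sE d] by (simp add: m_def s_def)
      also have "\<dots> \<le> ennreal (KK d m * R ^ m * (hc_alpha s * (diameter (F j) / 2) powr s))"
      proof (intro ennreal_leI)
        have "diameter (A j) powr s \<le> diameter (F j) powr s"
          using dAF dA0 s by (intro powr_mono2) auto
        also have "\<dots> = 2 powr s * (diameter (F j) / 2) powr s"
          using dA0 dAF by (subst powr_mult[symmetric]) auto
        finally have "diameter (A j) powr s \<le> 2 powr s * (diameter (F j) / 2) powr s" .
        then have "hc_alpha d * 2 ^ m * ((1 + 2 * real m) / 2) powr d * R ^ m * diameter (A j) powr s
           \<le> hc_alpha d * 2 ^ m * ((1 + 2 * real m) / 2) powr d * R ^ m * (2 powr s * (diameter (F j) / 2) powr s)"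
          using hc_alpha_pos[of d] d R by (intro mult_left_mono) auto
        also have "\<dots> = KK d m * R ^ m * (hc_alpha s * (diameter (F j) / 2) powr s)"
          using hc_alpha_pos[of s] s by (simp add: KK_def s_def field_simps)
        finally show "hc_alpha d * 2 ^ m * ((1 + 2 * real m) / 2) powr d * R ^ m * diameter (A j) powr s
           \<le> KK d m * R ^ m * (hc_alpha s * (diameter (F j) / 2) powr s)" .
      qed
      also have "\<dots> = ennreal (KK d m * R ^ m) * hc_term s (F j)"
        using Fne True s c0 hc_alpha_pos[of s] diameter_ge_0[OF True]
        by (simp add: hc_term_def ennreal_mult)
      finally show ?thesis .
    qed
  qed
  have "hausdorff_content d E \<le> (\<Sum>j. hausdorff_content d (A j \<times> snd ` E))"
    by (rule H_subadd[OF E_sub])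
  also have "\<dots> \<le> (\<Sum>j. ennreal (KK d m * R ^ m) * hc_term s (F j))"
    by (intro suminf_le each) auto
  also have "\<dots> = ennreal (KK d m * R ^ m) * (\<Sum>j. hc_term s (F j))" by simp
  finally show ?thesis by (simp add: m_def s_def)
qed



lemma hc_alpha_0[simp]: "hc_alpha 0 = 1"
  by (simp add: hc_alpha_def)

lemma H0_ge1:
  assumes "S \<noteq> {}"
  shows "1 \<le> hausdorff_content 0 S"
  unfolding hausdorff_content_def
proof (rule INF_greatest)
  fix F :: "nat \<Rightarrow> _" assume "F \<in> {F. S \<subseteq> (\<Union>j. F j)}"
  then obtain j where j: "F j \<noteq> {}" using assms by blast
  have "1 \<le> hc_term 0 (F j)" using j by (simp add: hc_term_def)
  also have "\<dots> = (\<Sum>i\<in>{j::nat}. hc_term 0 (F i))" by simp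
  also have "\<dots> \<le> (\<Sum>i. hc_term 0 (F i))" by (intro sum_le_suminf) auto
  finally show "1 \<le> (\<Sum>i. hc_term 0 (F i))" .
qed

lemma top_pow: "n > 0 \<Longrightarrow> (top::ennreal) ^ n = top"
  by (induction n) (auto simp: ennreal_top_mult power_0_left)

lemma main_eq:
  fixes d :: real
  assumes dm: "d = real CARD('m::finite)"
  shows "\<forall>E :: ((real ^ 'n) \<times> (real ^ 'm)) set.
           hausdorff_content d E
             \<le> ennreal (hc_alpha d / 2 ^ CARD('m)) * ediam E ^ CARD('m) * hausdorff_content (d - real CARD('m)) (fst ` E)"
proof
  fix E :: "((real ^ 'n) \<times> (real ^ 'm)) set"
  define m where "m = CARD('m)"
  have m0: "m > 0" by (simp add: m_def)
  define C where "C = hc_alpha d / 2 ^ m"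
  have C0: "C > 0" using hc_alpha_pos[of d] dm by (simp add: C_def)
  show "hausdorff_content d E \<le> ennreal (hc_alpha d / 2 ^ CARD('m)) * ediam E ^ CARD('m) * hausdorff_content (d - real CARD('m)) (fst ` E)"
  proof (cases "E = {}")
    case True then show ?thesis by simp
  next
    case Ene: False
    have H1: "1 \<le> hausdorff_content 0 (fst ` E)" using Ene by (intro H0_ge1) auto
    show ?thesis
    proof (cases "bounded E")
      case False
      have "ennreal C * top ^ m = top" using C0 m0 by (simp add: top_pow)
      moreover have "hausdorff_content 0 (fst ` E) \<noteq> 0" using H1 by auto
      ultimately have "ennreal C * ediam E ^ m * hausdorff_content 0 (fst ` E) = top"
        using False by (simp add: ediam_def)
      then show ?thesis using dm by (simp add: C_def m_def)
    next
      case True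
      define D where "D = diameter E"
      have D0: "D \<ge> 0" using diameter_ge_0[OF True] by (simp add: D_def)
      have pw: "(D / 2) powr d = (D / 2) ^ m"
      proof (cases "D = 0")
        case True then show ?thesis using m0 dm by (simp add: m_def)
      next
        case False then show ?thesis using D0 dm by (simp add: m_def powr_realpow)
      qed
      have "hausdorff_content d E \<le> hc_term d E" by (rule H_le_term)
      also have "\<dots> = ennreal (C * D ^ m)"
        using Ene True dm m0 pw by (simp add: hc_term_def D_def C_def power_divide m_def)
      also have "\<dots> = ennreal C * ediam E ^ m * 1"
        using True C0 D0 by (simp add: ediam_def D_def ennreal_mult ennreal_power)
      also have "\<dots> \<le> ennreal C * ediam E ^ m * hausdorff_content 0 (fst ` E)"
        by (intro mult_left_mono H1) auto
      finally show ?thesis using dm by (simp add: C_def m_def)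
    qed
  qed
qed



lemma bounded_bound_case:
  fixes E :: "((real ^ 'n) \<times> (real ^ 'm::finite)) set"
  assumes dm: "d > real CARD('m)" and bE: "bounded E" and Ene: "E \<noteq> {}"
  shows "hausdorff_content d E
      \<le> ennreal (KK d CARD('m)) * ediam E ^ CARD('m) * hausdorff_content (d - real CARD('m)) (fst ` E)"
proof -
  define m where "m = CARD('m)"
  define D where "D = diameter E"
  have D0: "D \<ge> 0" using diameter_ge_0[OF bE] by (simp add: D_def)
  have dpos: "d > 0" using dm by (smt (verit) of_nat_0_le_iff)
  have K0: "KK d m > 0" using KK_pos dm by (simp add: m_def)
  have rhs: "ennreal (KK d m) * ediam E ^ m = ennreal (KK d m * D ^ m)"
    using bE K0 D0 by (simp add: ediam_def D_def ennreal_mult ennreal_power)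
  show ?thesis
  proof (cases "D = 0")
    case True
    have "hausdorff_content d E \<le> hc_term d E" by (rule H_le_term)
    also have "\<dots> = 0" using True Ene bE dpos by (simp add: hc_term_def D_def)
    finally show ?thesis by simp
  next
    case False
    then have Dp: "D > 0" using D0 by simp
    obtain p where p: "p \<in> E" using Ene by blast
    have dl: "dist x y \<le> D" if "x \<in> E" "y \<in> E" for x y
      using diameter_bounded_bound[OF bE that] by (simp add: D_def)
    have sE: "snd ` E \<subseteq> cball (snd p) D"
    proof
      fix z assume "z \<in> snd ` E"
      then obtain q where "q \<in> E" "z = snd q" by blast
      then show "z \<in> cball (snd p) D" using dl[OF p \<open>q \<in> E\<close>] dist_snd_le[of p q] by auto
    qed
    have "hausdorff_content d E \<le> ennreal (KK d m * D ^ m) * hausdorff_content (d - real m) (fst ` E)"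
      unfolding hausdorff_content_def[of "d - real m"]
    proof (rule ennreal_le_mult_INF)
      show "KK d m * D ^ m > 0" using K0 Dp by simp
    next
      fix F :: "nat \<Rightarrow> _" assume F: "F \<in> {F. fst ` E \<subseteq> (\<Union>j. F j)}"
      show "hausdorff_content d E \<le> ennreal (KK d m * D ^ m) * (\<Sum>j. hc_term (d - real m) (F j))"
      proof (rule Q_bound[OF sE Dp _ _ dm, where F = F, unfolded m_def[symmetric]])
        show "fst ` E \<subseteq> (\<Union>j. F j)" using F by simp
      next
        fix j
        show "diameter (F j \<inter> fst ` E) \<le> D"
        proof (rule diameter_le)
          show "F j \<inter> fst ` E \<noteq> {} \<or> 0 \<le> D" using D0 by simp
        next
          fix x y assume "x \<in> F j \<inter> fst ` E" "y \<in> F j \<inter> fst ` E"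
          then obtain x' y' where "x' \<in> E" "y' \<in> E" "x = fst x'" "y = fst y'" by auto
          then show "norm (x - y) \<le> D" using dl[of x' y'] dist_fst_le[of x' y'] by (simp add: dist_norm)
        qed
      qed
    qed
    then show ?thesis using rhs by (simp add: m_def mult.assoc)
  qed
qed



lemma slice_zero:
  fixes E :: "((real ^ 'n) \<times> (real ^ 'm::finite)) set"
  assumes dm: "d > real CARD('m)" and H0: "hausdorff_content (d - real CARD('m)) (fst ` E) = 0"
    and R: "R > 0"
  shows "hausdorff_content d (E \<inter> {p. snd p \<in> cball 0 R}) = 0"
proof -
  define m where "m = CARD('m)"
  define s where "s = d - real m"
  have s: "s > 0" using dm by (simp add: s_def m_def)
  define Ek where "Ek = E \<inter> {p. snd p \<in> cball 0 R}"
  define c where "c = KK d m * R ^ m"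
  have c0: "c > 0" using KK_pos dm R by (simp add: c_def m_def)
  have as0: "hc_alpha s > 0" using hc_alpha_pos s by simp
  have "hausdorff_content d Ek \<le> 0"
  proof (rule ennreal_le_epsilon)
    fix e :: real assume e: "0 < e"
    define \<delta> where "\<delta> = min (e / c) (hc_alpha s * (R / 2) powr s)"
    have \<delta>0: "\<delta> > 0" using e c0 as0 R by (simp add: \<delta>_def)
    have "hausdorff_content s (fst ` E) < ennreal \<delta>" using H0 \<delta>0 by (simp add: s_def m_def)
    then obtain F :: "nat \<Rightarrow> _" where F: "fst ` E \<subseteq> (\<Union>j. F j)" "(\<Sum>j. hc_term s (F j)) < ennreal \<delta>"
      unfolding hausdorff_content_def INF_less_iff by auto
    have diamF: "diameter (F j \<inter> fst ` Ek) \<le> R" if "bounded (F j \<inter> fst ` Ek)" for j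
    proof (cases "F j = {}")
      case True then show ?thesis using R by simp
    next
      case Fne: False
      have lt: "hc_term s (F j) < ennreal \<delta>" using F(2) ennreal_suminf_lessD by blast
      then have bF: "bounded (F j)" using Fne by (auto simp: hc_term_def split: if_splits)
      have "ennreal (hc_alpha s * (diameter (F j) / 2) powr s) < ennreal \<delta>"
        using lt Fne bF s by (simp add: hc_term_def)
      then have "hc_alpha s * (diameter (F j) / 2) powr s < hc_alpha s * (R / 2) powr s"
      proof -
        have "0 \<le> hc_alpha s * (diameter (F j) / 2) powr s" using as0 by simp
        then have "hc_alpha s * (diameter (F j) / 2) powr s < \<delta>"
          using \<open>ennreal (hc_alpha s * (diameter (F j) / 2) powr s) < ennreal \<delta>\<close> ennreal_less_iff by blast
        also have "\<delta> \<le> hc_alpha s * (R / 2) powr s" unfolding \<delta>_def by simp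
        finally show ?thesis .
      qed
      then have "(diameter (F j) / 2) powr s < (R / 2) powr s" using as0 by simp
      then have "diameter (F j) < R"
      proof (rule contrapos_pp)
        assume "\<not> diameter (F j) < R"
        then have "(R / 2) powr s \<le> (diameter (F j) / 2) powr s"
          using s R by (intro powr_mono2) auto
        then show "\<not> (diameter (F j) / 2) powr s < (R / 2) powr s" by simp
      qed
      moreover have "diameter (F j \<inter> fst ` Ek) \<le> diameter (F j)"
        using bF by (intro diameter_subset) auto
      ultimately show ?thesis by simp
    qed
    have sE: "snd ` Ek \<subseteq> cball 0 R" by (auto simp: Ek_def)
    have cov: "fst ` Ek \<subseteq> (\<Union>j. F j)" using F(1) by (auto simp: Ek_def)
    have "hausdorff_content d Ek \<le> ennreal c * (\<Sum>j. hc_term s (F j))"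
      using Q_bound[OF sE R cov diamF dm] by (simp add: c_def m_def s_def)
    also have "\<dots> \<le> ennreal c * ennreal (e / c)"
    proof (rule mult_left_mono)
      have "\<delta> \<le> e / c" unfolding \<delta>_def by simp
      then show "(\<Sum>j. hc_term s (F j)) \<le> ennreal (e / c)"
        using F(2) by (meson ennreal_leI less_imp_le order_trans)
    qed simp
    also have "\<dots> = ennreal (c * (e / c))" by (rule ennreal_mult[symmetric]) (use c0 e in auto)
    also have "\<dots> = ennreal e" using c0 by simp
    finally show "hausdorff_content d Ek \<le> 0 + ennreal e" by simp
  qed
  then show ?thesis by (simp add: Ek_def)
qed

lemma unbounded_case:
  fixes E :: "((real ^ 'n) \<times> (real ^ 'm::finite)) set"
  assumes dm: "d > real CARD('m)" and H0: "hausdorff_content (d - real CARD('m)) (fst ` E) = 0"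
  shows "hausdorff_content d E = 0"
proof -
  have "E \<subseteq> (\<Union>k::nat. E \<inter> {p. snd p \<in> cball 0 (real k + 1)})"
  proof
    fix p assume "p \<in> E"
    obtain k :: nat where "norm (snd p) \<le> real k" using real_arch_simple by blast
    then show "p \<in> (\<Union>k::nat. E \<inter> {p. snd p \<in> cball 0 (real k + 1)})"
      using \<open>p \<in> E\<close> by (auto simp: dist_norm intro!: exI[of _ k])
  qed
  then have "hausdorff_content d E \<le> (\<Sum>k::nat. hausdorff_content d (E \<inter> {p. snd p \<in> cball 0 (real k + 1)}))"
    by (rule H_subadd)
  also have "\<dots> = 0" using slice_zero[OF dm H0] by simp
  finally show ?thesis by simp
qed


theorem lemma4p1:
  fixes d :: real
  assumes "real CARD('m::finite) \<le> d"
      and "d \<le> real CARD('m) + real CARD('n::finite)"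
  shows "\<exists>C::real. \<forall>E :: ((real ^ 'n) \<times> (real ^ 'm)) set.
           hausdorff_content d E
             \<le> ennreal C * ediam E ^ CARD('m) * hausdorff_content (d - real CARD('m)) (fst ` E)"
proof (cases "d = real CARD('m)")
  case True
  show ?thesis using main_eq[OF True, where 'n = 'n] by blast
next
  case False
  then have dm: "d > real CARD('m)" using assms(1) by simp
  have K0: "KK d CARD('m) > 0" using KK_pos[OF dm] .
  show ?thesis
  proof (intro exI allI)
    fix E :: "((real ^ 'n) \<times> (real ^ 'm)) set"
    show "hausdorff_content d E
             \<le> ennreal (KK d CARD('m)) * ediam E ^ CARD('m) * hausdorff_content (d - real CARD('m)) (fst ` E)"
    proof (cases "E = {}")
      case True then show ?thesis by simp
    next
      case Ene: False
      show ?thesis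
      proof (cases "bounded E")
        case True then show ?thesis using bounded_bound_case[OF dm True Ene] by simp
      next
        case unb: False
        show ?thesis
        proof (cases "hausdorff_content (d - real CARD('m)) (fst ` E) = 0")
          case True then show ?thesis using unbounded_case[OF dm True] by simp
        next
          case Hne: False
          have "ennreal (KK d CARD('m)) \<noteq> 0" using K0 ennreal_eq_0_iff by (metis not_le)
          then have "ennreal (KK d CARD('m)) * ediam E ^ CARD('m) = top"
            using unb by (simp add: ediam_def top_pow)
          then show ?thesis using Hne by simp
        qed
      qed
    qed
  qed
qed

end
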